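(* Let $\widetilde L$ be a standardized Laplacian matrix of order $n$ and $P=\widetilde L+J$. Then both $\widetilde L$ and $P$ are semiconvergent, i.e., the limits $\lim_{k\to\infty}\widetilde L^k$ and $\lim_{k\to\infty}P^k$ exist.
   Context: A standardized Laplacian matrix of order $n$ is a real $n\times n$ matrix whose row sums are all $0$ and whose off-diagonal entries are nonpositive with absolute value at most $1/n$. $J$ is the $n\times n$ matrix with all entries $1/n$. *)

theory Defs
  imports "HOL-Analysis.Analysis"
begin

text \<open>Matrices of order n are represented as real^'n^'n, with n = CARD('n).\<close>

primrec matpow :: "real^'n^'n \<Rightarrow> nat \<Rightarrow> real^'n^'n" where
  "matpow A 0 = mat 1"
| "matpow A (Suc k) = A ** matpow A k"

definition standardized_laplacian :: "real^'n^'n \<Rightarrow> bool" where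
  "standardized_laplacian L \<longleftrightarrow>
     (\<forall>i. (\<Sum>j\<in>UNIV. L $ i $ j) = 0) \<and>
     (\<forall>i j. i \<noteq> j \<longrightarrow> L $ i $ j \<le> 0 \<and> \<bar>L $ i $ j\<bar> \<le> 1 / real CARD('n))"

definition Jmat :: "real^'n^'n" where
  "Jmat = (\<chi> i j. 1 / real CARD('n))"

definition semiconvergent :: "real^'n^'n \<Rightarrow> bool" where
  "semiconvergent A \<longleftrightarrow> convergent (\<lambda>k. matpow A k)"

end

theory Submission imports Defs "HOL-Real_Asymp.Real_Asymp" begin

lemma mm_entry: "(A ** B) $ i $ j = (\<Sum>k\<in>UNIV. A $ i $ k * B $ k $ j)"
  by (simp add: matrix_matrix_mult_def)

lemma matpow_commute: "matpow A k ** A = A ** matpow A k"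
  by (induction k) (simp_all add: matrix_mul_assoc[symmetric])

lemma rowsum_mult:
  fixes A B :: "real^'n^'n"
  assumes "\<forall>i j. A$i$j \<ge> 0" "\<forall>i. (\<Sum>j\<in>UNIV. A$i$j) = a"
      and "\<forall>i j. B$i$j \<ge> 0" "\<forall>i. (\<Sum>j\<in>UNIV. B$i$j) = b"
  shows "(\<forall>i j. (A**B)$i$j \<ge> 0) \<and> (\<forall>i. (\<Sum>j\<in>UNIV. (A**B)$i$j) = a*b)"
proof (intro conjI allI)
  fix i j show "(A**B)$i$j \<ge> 0" using assms by (auto simp: mm_entry intro!: sum_nonneg)
next
  fix i
  have "(\<Sum>j\<in>UNIV. (A**B)$i$j) = (\<Sum>j\<in>UNIV. \<Sum>k\<in>UNIV. A$i$k * B$k$j)"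
    by (simp add: mm_entry)
  also have "\<dots> = (\<Sum>k\<in>UNIV. \<Sum>j\<in>UNIV. A$i$k * B$k$j)" by (rule sum.swap)
  also have "\<dots> = (\<Sum>k\<in>UNIV. A$i$k * (\<Sum>j\<in>UNIV. B$k$j))"
    by (simp add: sum_distrib_left)
  also have "\<dots> = (\<Sum>k\<in>UNIV. A$i$k) * b" using assms(4) by (simp add: sum_distrib_right)
  finally show "(\<Sum>j\<in>UNIV. (A**B)$i$j) = a*b" using assms by simp
qed

lemma matpow_rowsum:
  fixes A :: "real^'n^'n"
  assumes "\<forall>i j. A$i$j \<ge> 0" "\<forall>i. (\<Sum>j\<in>UNIV. A$i$j) = a"
  shows "(\<forall>i j. matpow A k$i$j \<ge> 0) \<and> (\<forall>i. (\<Sum>j\<in>UNIV. matpow A k$i$j) = a^k)"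
proof (induction k)
  case 0
  have "(\<Sum>j\<in>UNIV. (mat 1::real^'n^'n)$i$j) = 1" for i
    by (simp add: mat_def)
  then show ?case by (simp add: mat_def)
next
  case (Suc k)
  show ?case using rowsum_mult[OF assms Suc[THEN conjunct1] Suc[THEN conjunct2]] by simp
qed

lemma pascal_sum:
  fixes g :: "nat \<Rightarrow> 'a::real_vector"
  shows "(\<Sum>j\<le>Suc k. (real (Suc k choose j) * x^(Suc k - j)) *\<^sub>R g j)
       = x *\<^sub>R (\<Sum>j\<le>k. (real (k choose j) * x^(k - j)) *\<^sub>R g j)
         + (\<Sum>j\<le>k. (real (k choose j) * x^(k - j)) *\<^sub>R g (Suc j))"
proof -
  have "x *\<^sub>R (\<Sum>j\<le>k. (real (k choose j) * x^(k - j)) *\<^sub>R g j)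
      = (\<Sum>j\<le>k. (real (k choose j) * x^(Suc k - j)) *\<^sub>R g j)"
    unfolding scaleR_sum_right by (rule sum.cong) (auto simp: Suc_diff_le mult_ac)
  also have "\<dots> = (\<Sum>j\<le>Suc k. (real (k choose j) * x^(Suc k - j)) *\<^sub>R g j)"
    by simp
  also have "\<dots> = x^(Suc k) *\<^sub>R g 0 + (\<Sum>j\<le>k. (real (k choose Suc j) * x^(k - j)) *\<^sub>R g (Suc j))"
    by (subst sum.atMost_Suc_shift) simp
  finally have 1: "x *\<^sub>R (\<Sum>j\<le>k. (real (k choose j) * x^(k - j)) *\<^sub>R g j) = \<dots>" .
  have "(\<Sum>j\<le>Suc k. (real (Suc k choose j) * x^(Suc k - j)) *\<^sub>R g j)
     = x^(Suc k) *\<^sub>R g 0 + (\<Sum>j\<le>k. (real (Suc k choose Suc j) * x^(k - j)) *\<^sub>R g (Suc j))"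
    by (subst sum.atMost_Suc_shift) simp
  also have "\<dots> = x^(Suc k) *\<^sub>R g 0 + (\<Sum>j\<le>k. (real (k choose Suc j) * x^(k - j)) *\<^sub>R g (Suc j))
      + (\<Sum>j\<le>k. (real (k choose j) * x^(k - j)) *\<^sub>R g (Suc j))"
    by (simp add: sum.distrib[symmetric] algebra_simps scaleR_add_left)
  finally show ?thesis using 1 by simp
qed


definition Bs :: "real \<Rightarrow> nat \<Rightarrow> (nat \<Rightarrow> real) \<Rightarrow> real" where
  "Bs p m f = (\<Sum>j\<le>m. (real (m choose j) * (1-p)^(m - j)) * (p^j * f j))"

lemma Bs_Suc: "Bs p (Suc m) f = (1-p) * Bs p m f + p * Bs p m (\<lambda>j. f (Suc j))"
proof -
  have "Bs p (Suc m) f = (1-p) * Bs p m f + (\<Sum>j\<le>m. (real (m choose j) * (1-p)^(m - j)) * (p^Suc j * f (Suc j)))"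
    unfolding Bs_def using pascal_sum[of m "1-p" "\<lambda>j. p^j * f j"] by simp
  also have "(\<Sum>j\<le>m. (real (m choose j) * (1-p)^(m - j)) * (p^Suc j * f (Suc j))) = p * Bs p m (\<lambda>j. f (Suc j))"
    unfolding Bs_def sum_distrib_left by (rule sum.cong) auto
  finally show ?thesis .
qed

lemma Bs_add: "Bs p m (\<lambda>j. f j + g j) = Bs p m f + Bs p m g"
  unfolding Bs_def by (simp add: sum.distrib algebra_simps)

lemma Bs_cmult: "Bs p m (\<lambda>j. c * f j) = c * Bs p m f"
  unfolding Bs_def by (simp add: sum_distrib_left algebra_simps)

lemma Bs_1: "Bs p m (\<lambda>j. 1) = 1"
proof (induction m)
  case 0 then show ?case by (simp add: Bs_def)
next
  case (Suc m) then show ?case by (simp add: Bs_Suc)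
qed

lemma Bs_const: "Bs p m (\<lambda>j. c) = c"
  using Bs_cmult[of p m c "\<lambda>j. 1"] Bs_1[of p m] by simp

lemma Bs_id: "Bs p m (\<lambda>j. real j) = m * p"
proof (induction m)
  case 0 then show ?case by (simp add: Bs_def)
next
  case (Suc m)
  have h: "Bs p m (\<lambda>j. real (Suc j)) = m*p + 1"
    using Bs_add[of p m "\<lambda>j. 1" "\<lambda>j. real j"] Suc.IH Bs_1[of p m] by (simp add: of_nat_Suc)
  show ?case by (simp only: Bs_Suc h Suc.IH) (simp add: algebra_simps)
qed

lemma Bs_sq: "Bs p m (\<lambda>j. (real j)^2) = m * p * (1-p) + (m*p)^2"
proof (induction m)
  case 0 then show ?case by (simp add: Bs_def)
next
  case (Suc m)
  have e: "(\<lambda>j. (real (Suc j))^2) = (\<lambda>j. (real j)^2 + (2 * real j + 1))"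
    by (auto simp: power2_eq_square algebra_simps)
  have "Bs p m (\<lambda>j. (real (Suc j))^2) = Bs p m (\<lambda>j. (real j)^2) + (2 * Bs p m (\<lambda>j. real j) + Bs p m (\<lambda>j. 1))"
    by (simp only: e Bs_add Bs_cmult)
  also have "\<dots> = m * p * (1-p) + (m*p)^2 + 2*(m*p) + 1"
    by (simp only: Suc.IH Bs_id Bs_1)
  finally have h: "Bs p m (\<lambda>j. (real (Suc j))^2) = \<dots>" .
  show ?case by (simp only: Bs_Suc h Suc.IH) (simp add: algebra_simps power2_eq_square)
qed

lemma Bs_var: "Bs p m (\<lambda>j. (real j - m*p)^2) = m * p * (1-p)"
proof -
  have e: "(\<lambda>j. (real j - m*p)^2) = (\<lambda>j. (real j)^2 + ((-2*(m*p)) * real j + (m*p)^2))"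
    by (auto simp: power2_eq_square algebra_simps)
  show ?thesis unfolding e Bs_add Bs_cmult Bs_id Bs_sq Bs_const
    by (simp add: power2_eq_square algebra_simps)
qed

lemma Bs_mono: assumes "0 \<le> p" "p \<le> 1" "\<And>j. f j \<le> g j" shows "Bs p m f \<le> Bs p m g"
  unfolding Bs_def using assms by (intro sum_mono mult_left_mono) (auto intro!: mult_left_mono)

lemma Bs_absdev:
  assumes "0 \<le> p" "p \<le> 1" "m > 0"
  shows "Bs p m (\<lambda>j. \<bar>real j - m*p\<bar>) \<le> (p*(1-p) + 1) * sqrt m / 2"
proof -
  define t where "t = sqrt m"
  have t: "t > 0" using assms by (simp add: t_def)
  have ineq: "\<bar>y\<bar> \<le> (1/(2*t)) * y^2 + t/2" for y :: real
  proof -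
    have "0 \<le> (\<bar>y\<bar> - t)^2" by simp
    hence "2*\<bar>y\<bar>*t \<le> y^2 + t^2" by (simp add: power2_eq_square algebra_simps)
    thus ?thesis using t by (simp add: field_simps power2_eq_square)
  qed
  have "Bs p m (\<lambda>j. \<bar>real j - m*p\<bar>) \<le> Bs p m (\<lambda>j. (1/(2*t)) * (real j - m*p)^2 + t/2)"
    by (intro Bs_mono assms ineq)
  also have "\<dots> = (1/(2*t)) * (m*p*(1-p)) + t/2"
    by (simp only: Bs_add Bs_cmult Bs_var Bs_const)
  also have "\<dots> = (p*(1-p) + 1) * t / 2"
  proof -
    have tt: "t * t = real m" unfolding t_def by simp
    show ?thesis using t by (simp add: field_simps tt[symmetric])
  qed
  finally show ?thesis by (simp add: t_def)
qed


lemma term_id: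
  assumes q: "0 < q" and p: "p = 1 - q" and j: "j \<le> Suc k"
  shows "\<bar>real (Suc k choose j) * q^(Suc k - j) - real (k choose j) * q^(k - j)\<bar> * p^j
       = (real (Suc k choose j) * (1-p)^(Suc k - j)) * (p^j * \<bar>real j - real (Suc k) * p\<bar>) / (real (Suc k) * q)"
proof (cases "j \<le> k")
  case True
  have a: "real (Suc k - j) * real (Suc k choose j) = real (Suc k) * real (k choose j)"
    using binomial_absorb_comp[of "Suc k" j] by (metis diff_Suc_1 of_nat_mult)
  have sk: "Suc k - j = Suc (k - j)" using True by simp
  have r: "real (Suc k - j) = real (Suc k) - real j" using True by simp
  have b: "real (k choose j) = real (Suc k choose j) * (real (Suc k) - real j) / real (Suc k)"
    using a[unfolded r] by (simp add: field_simps)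
  have qk: "q + q * real k > 0" using q by (simp add: add_pos_nonneg)
  have "real (k choose j) * q^(k - j) = real (Suc k choose j) * q^(Suc k - j) * (real (Suc k) - real j) / (real (Suc k) * q)"
    using q qk unfolding sk b by (simp add: field_simps)
  hence eq: "real (Suc k choose j) * q^(Suc k - j) - real (k choose j) * q^(k - j)
      = real (Suc k choose j) * q^(Suc k - j) * (real j - real (Suc k) * p) / (real (Suc k) * q)"
    using q qk by (simp add: field_simps p)
  have X: "real (Suc k choose j) * q^(Suc k - j) \<ge> 0" using q by simp
  have mq: "real (Suc k) * q > 0" using q by simp
  have "\<bar>real (Suc k choose j) * q^(Suc k - j) - real (k choose j) * q^(k - j)\<bar> * p^j
     = (real (Suc k choose j) * q^(Suc k - j) * \<bar>real j - real (Suc k) * p\<bar> / (real (Suc k) * q)) * p^j"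
    unfolding eq using X mq q by (simp add: abs_mult abs_divide)
  moreover have pq: "1 - p = q" using p by simp
  ultimately show ?thesis by (simp add: pq)
next
  case False
  hence jk: "j = Suc k" using j by simp
  have "real (Suc k) - real (Suc k) * p = real (Suc k) * q" by (simp add: p algebra_simps)
  moreover have "real (Suc k) * q > 0" using q by simp
  ultimately have "\<bar>real (Suc k) - real (Suc k) * p\<bar> = real (Suc k) * q" by simp
  moreover have c0: "(k choose Suc k) = 0" by (simp add: binomial_eq_0)
  ultimately show ?thesis using q unfolding jk by (simp add: c0)
qed

lemma Tk_bound:
  assumes q: "0 < q" "q \<le> 1" and p: "p = 1 - q"
  shows "(\<Sum>j\<le>Suc k. \<bar>real (Suc k choose j) * q^(Suc k - j) - real (k choose j) * q^(k - j)\<bar> * p^j)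
         \<le> (p*q + 1) / (2 * q * sqrt (real (Suc k)))"
proof -
  have "(\<Sum>j\<le>Suc k. \<bar>real (Suc k choose j) * q^(Suc k - j) - real (k choose j) * q^(k - j)\<bar> * p^j)
     = Bs p (Suc k) (\<lambda>j. \<bar>real j - real (Suc k) * p\<bar>) / (real (Suc k) * q)"
    unfolding Bs_def sum_divide_distrib by (rule sum.cong) (use term_id[OF q(1) p] in auto)
  also have "\<dots> \<le> ((p*(1-p) + 1) * sqrt (real (Suc k)) / 2) / (real (Suc k) * q)"
    using Bs_absdev[of p "Suc k"] q p by (intro divide_right_mono) auto
  also have "\<dots> = (p*q + 1) / (2 * q * sqrt (real (Suc k)))"
  proof -
    have s: "sqrt (real (Suc k)) * sqrt (real (Suc k)) = real (Suc k)" by simp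
    have sp: "sqrt (real (Suc k)) > 0" by simp
    have pq: "1 - p = q" using p by simp
    have g: "\<And>a s q::real. s > 0 \<Longrightarrow> q > 0 \<Longrightarrow> (a * s / 2) / ((s * s) * q) = a / (2 * q * s)"
      by (simp add: field_simps)
    show ?thesis unfolding pq using g[OF sp q(1), of "p*q+1"] s by simp
  qed
  finally show ?thesis .
qed


lemma tendsto_mm_left:
  fixes X :: "'b \<Rightarrow> real^'n^'n"
  assumes "(X \<longlongrightarrow> E) F" shows "((\<lambda>i. A ** X i) \<longlongrightarrow> A ** E) F"
  unfolding matrix_matrix_mult_def by (intro tendsto_intros assms)

lemma tendsto_mm_right:
  fixes X :: "'b \<Rightarrow> real^'n^'n"
  assumes "(X \<longlongrightarrow> E) F" shows "((\<lambda>i. X i ** A) \<longlongrightarrow> E ** A) F"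
  unfolding matrix_matrix_mult_def by (intro tendsto_intros assms)

lemma mm_sum_scaleR:
  fixes A :: "real^'n^'n"
  shows "A ** (\<Sum>j\<in>S. c j *\<^sub>R B j) = (\<Sum>j\<in>S. c j *\<^sub>R (A ** B j))"
  by (simp add: vec_eq_iff mm_entry sum_distrib_left sum_component mult_ac sum.swap[of _ UNIV S])

lemma mm_diff_left:
  fixes A B C :: "real^'n^'n"
  shows "A ** (B - C) = A ** B - A ** C"
  by (simp add: vec_eq_iff mm_entry algebra_simps sum_subtractf)

lemma mm_diff_right:
  fixes A B C :: "real^'n^'n"
  shows "(A - B) ** C = A ** C - B ** C"
  by (simp add: vec_eq_iff mm_entry algebra_simps sum_subtractf)

lemma mm_add_right:
  fixes A B C :: "real^'n^'n"
  shows "(A + B) ** C = A ** C + B ** C"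
  by (simp add: vec_eq_iff mm_entry algebra_simps sum.distrib)

lemma conv_crit:
  fixes P :: "real^'n^'n"
  assumes bnd: "bounded (range (matpow P))"
    and D: "(\<lambda>k. matpow P (Suc k) - matpow P k) \<longlonglongrightarrow> 0"
  shows "convergent (matpow P)"
proof -
  have cl: "P ** E = E \<and> E ** P = E" if r: "strict_mono r" and l: "(matpow P \<circ> r) \<longlonglongrightarrow> E" for r E
  proof -
    have Dr: "(\<lambda>i. matpow P (Suc (r i)) - matpow P (r i)) \<longlonglongrightarrow> 0"
      using LIMSEQ_subseq_LIMSEQ[OF D r] by (simp add: o_def)
    have l': "(\<lambda>i. matpow P (r i)) \<longlonglongrightarrow> E" using l by (simp add: o_def)
    have "(\<lambda>i. matpow P (r i) + (matpow P (Suc (r i)) - matpow P (r i))) \<longlonglongrightarrow> E + 0"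
      by (intro tendsto_add l' Dr)
    hence S: "(\<lambda>i. matpow P (Suc (r i))) \<longlonglongrightarrow> E" by simp
    have "(\<lambda>i. P ** matpow P (r i)) \<longlonglongrightarrow> P ** E" by (rule tendsto_mm_left[OF l'])
    hence 1: "P ** E = E" using S by (simp add: LIMSEQ_unique)
    have "(\<lambda>i. matpow P (r i) ** P) \<longlonglongrightarrow> E ** P" by (rule tendsto_mm_right[OF l'])
    hence 2: "E ** P = E" using S by (simp add: LIMSEQ_unique matpow_commute)
    show ?thesis using 1 2 by simp
  qed
  have powl: "matpow P j ** E = E" if "P ** E = E" for j E
    by (induction j) (simp_all add: matrix_mul_assoc[symmetric] that)
  have powr: "E ** matpow P j = E" if "E ** P = E" for j E
    by (induction j) (simp_all add: matrix_mul_assoc that)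
  have uniq: "E = E'" if "strict_mono r" "(matpow P \<circ> r) \<longlonglongrightarrow> E"
      "strict_mono s" "(matpow P \<circ> s) \<longlonglongrightarrow> E'" for r s E E'
  proof -
    have cE: "P ** E = E \<and> E ** P = E" and cE': "P ** E' = E' \<and> E' ** P = E'"
      using cl that by blast+
    have "(\<lambda>i. matpow P (r i) ** E') \<longlonglongrightarrow> E ** E'"
      using tendsto_mm_right[of "\<lambda>i. matpow P (r i)"] that(2) by (simp add: o_def)
    hence a: "E ** E' = E'" using powl[of E'] cE' by (simp add: LIMSEQ_const_iff)
    have "(\<lambda>i. E ** matpow P (s i)) \<longlonglongrightarrow> E ** E'"
      using tendsto_mm_left[of "\<lambda>i. matpow P (s i)"] that(4) by (simp add: o_def)
    hence b: "E ** E' = E" using powr[of E] cE by (simp add: LIMSEQ_const_iff)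
    show ?thesis using a b by simp
  qed
  obtain E r where r: "strict_mono r" and l: "(matpow P \<circ> r) \<longlonglongrightarrow> E"
    using bounded_imp_convergent_subsequence[OF bnd] by blast
  have "matpow P \<longlonglongrightarrow> E"
  proof (rule ccontr)
    assume "\<not> matpow P \<longlonglongrightarrow> E"
    then obtain e where e: "e > 0" and ne: "\<not> eventually (\<lambda>k. dist (matpow P k) E < e) sequentially"
      unfolding tendsto_iff by blast
    define K where "K = {k. e \<le> dist (matpow P k) E}"
    have inf: "infinite K"
    proof
      assume "finite K"
      then obtain N where "\<forall>k\<in>K. k \<le> N" using finite_nat_set_iff_bounded_le by blast
      have "\<forall>k\<ge>Suc N. dist (matpow P k) E < e"
      proof (intro allI impI)
        fix k assume k: "Suc N \<le> k"
        show "dist (matpow P k) E < e"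
        proof (rule ccontr)
          assume "\<not> dist (matpow P k) E < e"
          hence "k \<in> K" by (simp add: K_def not_less)
          thus False using \<open>\<forall>k\<in>K. k \<le> N\<close> k by auto
        qed
      qed
      thus False using ne unfolding eventually_sequentially by blast
    qed
    define s where "s = enumerate K"
    have s: "strict_mono s" using strict_mono_enumerate[OF inf] by (simp add: s_def)
    have sK: "e \<le> dist (matpow P (s i)) E" for i
      using enumerate_in_set[OF inf, of i] by (simp add: s_def K_def)
    have "bounded (range (matpow P \<circ> s))"
      by (rule bounded_subset[OF bnd]) auto
    then obtain E2 r2 where r2: "strict_mono r2" and l2: "((matpow P \<circ> s) \<circ> r2) \<longlonglongrightarrow> E2"
      using bounded_imp_convergent_subsequence by blast
    have "E = E2" using uniq[OF r l strict_mono_o[OF s r2] l2[folded o_assoc]] by simp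
    have "(\<lambda>i. dist (matpow P (s (r2 i))) E) \<longlonglongrightarrow> dist E2 E"
      using l2 by (intro tendsto_intros) (simp add: o_def)
    hence "e \<le> dist E2 E" by (rule LIMSEQ_le_const) (use sK in auto)
    thus False using \<open>E = E2\<close> e by simp
  qed
  thus ?thesis unfolding convergent_def by blast
qed


lemma norm_mat_le:
  fixes M :: "real^'n^'n"
  shows "norm M \<le> (\<Sum>i\<in>UNIV. \<Sum>j\<in>UNIV. \<bar>M$i$j\<bar>)"
proof -
  have "norm M \<le> (\<Sum>i\<in>UNIV. norm (M$i))"
    unfolding norm_vec_def by (rule L2_set_le_sum) simp
  also have "\<dots> \<le> (\<Sum>i\<in>UNIV. \<Sum>j\<in>UNIV. \<bar>M$i$j\<bar>)"
    by (intro sum_mono norm_le_l1_cart)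
  finally show ?thesis .
qed

lemma lap_facts:
  fixes L :: "real^'n^'n"
  assumes "standardized_laplacian L"
  shows "\<forall>i. (\<Sum>j\<in>UNIV. L$i$j) = 0"
    and "\<And>i j. i \<noteq> j \<Longrightarrow> - (1 / real CARD('n)) \<le> L$i$j \<and> L$i$j \<le> 0"
    and "\<And>i. 0 \<le> L$i$i"
proof -
  show rs: "\<forall>i. (\<Sum>j\<in>UNIV. L$i$j) = 0" using assms unfolding standardized_laplacian_def by blast
  show off: "- (1 / real CARD('n)) \<le> L$i$j \<and> L$i$j \<le> 0" if "i \<noteq> j" for i j
  proof -
    have "L$i$j \<le> 0 \<and> \<bar>L$i$j\<bar> \<le> 1 / real CARD('n)"
      using assms that unfolding standardized_laplacian_def by blast
    thus ?thesis by (auto simp: abs_le_iff)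
  qed
  fix i
  have "(\<Sum>j\<in>UNIV. L$i$j) = L$i$i + (\<Sum>j\<in>UNIV - {i}. L$i$j)"
    by (simp add: sum.remove)
  moreover have "(\<Sum>j\<in>UNIV - {i}. L$i$j) \<le> 0"
    using off by (intro sum_nonpos) auto
  ultimately show "0 \<le> L$i$i" using rs by simp
qed

theorem theorem6:
  fixes L :: "real^'n^'n"
  assumes "standardized_laplacian L"
  shows "semiconvergent L \<and> semiconvergent (L + Jmat)"
proof -
  note lf = lap_facts[OF assms]
  define q :: real where "q = 1 / real CARD('n)"
  define p where "p = 1 - q"
  have cpos: "real CARD('n) > 0" by simp
  have q0: "0 < q" and q1: "q \<le> 1" using cpos unfolding q_def by (auto simp: field_simps)
  have nq: "real CARD('n) * q = 1" using cpos unfolding q_def by simp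
  define P where "P = L + Jmat"
  define R where "R = P - q *\<^sub>R mat 1"
  have Pe: "P$i$j = L$i$j + q" for i j by (simp add: P_def Jmat_def q_def)
  have Re: "R$i$j = L$i$j + (if i = j then 0 else q)" for i j
    by (simp add: R_def Pe mat_def)
  have Pnn: "\<forall>i j. P$i$j \<ge> 0"
  proof (intro allI)
    fix i j show "P$i$j \<ge> 0"
      using lf(2)[of i j] lf(3)[of i] q0 by (cases "i = j") (auto simp: Pe q_def)
  qed
  have Prs: "\<forall>i. (\<Sum>j\<in>UNIV. P$i$j) = 1"
    using lf(1) nq by (simp add: Pe sum.distrib)
  have Rnn: "\<forall>i j. R$i$j \<ge> 0"
  proof (intro allI)
    fix i j show "R$i$j \<ge> 0"
      using lf(2)[of i j] lf(3)[of i] q0 by (cases "i = j") (auto simp: Re q_def)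
  qed
  have Rrs: "\<forall>i. (\<Sum>j\<in>UNIV. R$i$j) = p"
  proof
    fix i
    have "(\<Sum>j\<in>UNIV. R$i$j) = (\<Sum>j\<in>UNIV. P$i$j) - q * (\<Sum>j\<in>UNIV. (mat 1::real^'n^'n)$i$j)"
      by (simp add: R_def sum_subtractf sum_distrib_left)
    also have "(\<Sum>j\<in>UNIV. (mat 1::real^'n^'n)$i$j) = 1" by (simp add: mat_def)
    finally show "(\<Sum>j\<in>UNIV. R$i$j) = p" using Prs by (simp add: p_def)
  qed
  have PqR: "P = q *\<^sub>R mat 1 + R" by (simp add: R_def)
  have expand: "matpow P k = (\<Sum>j\<le>k. (real (k choose j) * q^(k - j)) *\<^sub>R matpow R j)" for k
  proof (induction k)
    case 0 then show ?case by simp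
  next
    case (Suc k)
    have "matpow P (Suc k) = P ** matpow P k" by simp
    also have "\<dots> = q *\<^sub>R matpow P k + R ** matpow P k"
      by (simp add: PqR mm_add_right scalar_matrix_assoc[symmetric])
    also have "R ** matpow P k = (\<Sum>j\<le>k. (real (k choose j) * q^(k - j)) *\<^sub>R matpow R (Suc j))"
      by (simp add: Suc mm_sum_scaleR)
    finally show ?case using pascal_sum[of k q "matpow R"] Suc by simp
  qed
  define T where "T k = (\<Sum>j\<le>Suc k. \<bar>real (Suc k choose j) * q^(Suc k - j) - real (k choose j) * q^(k - j)\<bar> * p^j)" for k
  have Rpow: "(\<forall>a b. matpow R j$a$b \<ge> 0) \<and> (\<forall>a. (\<Sum>l\<in>UNIV. matpow R j$a$l) = p^j)" for j
    using matpow_rowsum[OF Rnn Rrs, of j] by blast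
  have Dbound: "\<bar>(matpow P (Suc k) - matpow P k)$i$l\<bar> \<le> T k" for k i l
  proof -
    define w where "w j = real (Suc k choose j) * q^(Suc k - j) - real (k choose j) * q^(k - j)" for j
    have "matpow P k = (\<Sum>j\<le>Suc k. (real (k choose j) * q^(k - j)) *\<^sub>R matpow R j)"
      by (simp add: expand binomial_eq_0)
    hence "matpow P (Suc k) - matpow P k = (\<Sum>j\<le>Suc k. w j *\<^sub>R matpow R j)"
      by (simp only: expand[of "Suc k"] w_def scaleR_diff_left sum_subtractf)
    hence eq: "(matpow P (Suc k) - matpow P k)$i$l = (\<Sum>j\<le>Suc k. w j * matpow R j$i$l)"
      by (simp only: sum_component vector_scaleR_component) simp
    have "\<bar>(matpow P (Suc k) - matpow P k)$i$l\<bar> \<le> (\<Sum>j\<le>Suc k. \<bar>w j * matpow R j$i$l\<bar>)"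
      unfolding eq by (rule sum_abs)
    also have "\<dots> = (\<Sum>j\<le>Suc k. \<bar>w j\<bar> * matpow R j$i$l)"
      using Rpow by (intro sum.cong refl) (simp add: abs_mult)
    also have "\<dots> \<le> (\<Sum>j\<le>Suc k. \<bar>w j\<bar> * p^j)"
    proof (intro sum_mono mult_left_mono)
      fix j
      have "matpow R j$i$l \<le> (\<Sum>l\<in>UNIV. matpow R j$i$l)"
        using Rpow by (intro member_le_sum) auto
      thus "matpow R j$i$l \<le> p^j" using Rpow by simp
    qed simp
    finally show ?thesis by (simp add: T_def w_def)
  qed
  have Tlim: "(\<lambda>k. (p*q+1)/(2*q) * inverse (sqrt (real (Suc k)))) \<longlonglongrightarrow> 0"
  proof -
    have "(\<lambda>k. inverse (sqrt (real (Suc k)))) \<longlonglongrightarrow> 0" by real_asymp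
    thus ?thesis by (rule tendsto_mult_right_zero)
  qed
  have Dlim: "(\<lambda>k. matpow P (Suc k) - matpow P k) \<longlonglongrightarrow> 0"
  proof (intro vec_tendstoI)
    fix i l
    have "(\<lambda>k. (matpow P (Suc k) - matpow P k)$i$l) \<longlonglongrightarrow> 0"
    proof (rule Lim_null_comparison[OF _ Tlim], intro always_eventually allI)
      fix k
      have "T k \<le> (p*q+1)/(2*q * sqrt (real (Suc k)))"
        unfolding T_def by (rule Tk_bound[OF q0 q1]) (simp add: p_def)
      also have "\<dots> = (p*q+1)/(2*q) * inverse (sqrt (real (Suc k)))"
        by (simp add: field_simps)
      finally show "norm ((matpow P (Suc k) - matpow P k)$i$l) \<le> (p*q+1)/(2*q) * inverse (sqrt (real (Suc k)))"
        using Dbound[of k i l] by simp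
    qed
    thus "(\<lambda>k. (matpow P (Suc k) - matpow P k)$i$l) \<longlonglongrightarrow> (0::real^'n^'n)$i$l" by simp
  qed
  have bnd: "bounded (range (matpow P))"
  proof -
    have "norm (matpow P k) \<le> real CARD('n) * real CARD('n)" for k
    proof -
      have rp: "(\<forall>i j. matpow P k$i$j \<ge> 0) \<and> (\<forall>i. (\<Sum>j\<in>UNIV. matpow P k$i$j) = 1)"
        using matpow_rowsum[OF Pnn Prs, of k] by simp
      have e1: "\<bar>matpow P k$i$j\<bar> \<le> 1" for i j
      proof -
        have "matpow P k$i$j \<le> (\<Sum>j\<in>UNIV. matpow P k$i$j)"
          using rp by (intro member_le_sum) auto
        thus ?thesis using rp by simp
      qed
      have "norm (matpow P k) \<le> (\<Sum>i\<in>UNIV. \<Sum>j\<in>UNIV. \<bar>matpow P k$i$j\<bar>)" by (rule norm_mat_le)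
      also have "\<dots> \<le> (\<Sum>i\<in>(UNIV::'n set). \<Sum>j\<in>(UNIV::'n set). 1)"
        by (intro sum_mono e1)
      finally show ?thesis by simp
    qed
    thus ?thesis unfolding bounded_iff by blast
  qed
  have convP: "convergent (matpow P)" by (rule conv_crit[OF bnd Dlim])
  then obtain E where E: "matpow P \<longlonglongrightarrow> E" unfolding convergent_def by blast
  have LJ: "L ** Jmat = 0"
    using lf(1) by (simp add: vec_eq_iff mm_entry Jmat_def sum_divide_distrib[symmetric])
  have Lid: "matpow L (Suc k) = matpow P (Suc k) - Jmat ** matpow P k" for k
  proof (induction k)
    case 0 then show ?case by (simp add: P_def)
  next
    case (Suc k)
    have "matpow L (Suc (Suc k)) = L ** (P ** matpow P k - Jmat ** matpow P k)"
      using Suc by simp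
    also have "\<dots> = L ** (P ** matpow P k)"
      by (simp add: mm_diff_left matrix_mul_assoc LJ)
    also have "\<dots> = P ** (P ** matpow P k) - Jmat ** (P ** matpow P k)"
      by (simp add: P_def mm_diff_right[symmetric])
    finally show ?case by simp
  qed
  have lim1: "(\<lambda>k. matpow P (Suc k) - Jmat ** matpow P k) \<longlonglongrightarrow> E - Jmat ** E"
    by (intro tendsto_diff LIMSEQ_Suc E tendsto_mm_left)
  have eqf: "(\<lambda>k. matpow L (Suc k)) = (\<lambda>k. matpow P (Suc k) - Jmat ** matpow P k)"
    by (rule ext) (rule Lid)
  have "(\<lambda>k. matpow L (Suc k)) \<longlonglongrightarrow> E - Jmat ** E"
    unfolding eqf by (rule lim1)
  hence "matpow L \<longlonglongrightarrow> E - Jmat ** E"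
    by (rule LIMSEQ_imp_Suc)
  hence "convergent (matpow L)" unfolding convergent_def by blast
  thus ?thesis using convP unfolding semiconvergent_def P_def by simp
qed

end
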